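(* Let $f$ satisfy conditions (1) and (2b), let $p>0$ and $\zeta>1$. In the expression \[ \int_0^\infty(1-2s)\,e^{-\zeta s}\sum_{n=0}^\infty c_{2n}\,p^n\sum_{k=0}^n(-1)^{n-k}\frac{(\zeta-1)^k}{(n-k)!\,(k!)^2}\,s^k\,ds \] the order of summation and integration may be reversed, for arbitrary values of $p$.
   Context: $f:[0,\infty)\to\mathbb{R}$; $c_n=2\pi\int_0^\infty f(r)\,r^{n+1}dr$. Condition (1): there is a constant $F$ with $0\le f(r)\le F$ for all $r\ge0$, $c_0$ exists and $c_0>0$. Condition (2b): $c_{2n}$ exists for all $n\in\mathbb{N}_0$ and $c_n^{1/n}=o(n^{1/2})$ as $n\to\infty$. (In the paper $\zeta=p/p'+1$ with $0<p'<p$.) *)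

theory Defs
  imports "HOL-Analysis.Analysis" "HOL-Library.Landau_Symbols"
begin

definition moment :: "(real \<Rightarrow> real) \<Rightarrow> nat \<Rightarrow> real" where
  "moment f n = 2 * pi * integral {0..} (\<lambda>r. f r * r ^ (n + 1))"

definition moment_exists :: "(real \<Rightarrow> real) \<Rightarrow> nat \<Rightarrow> bool" where
  "moment_exists f n \<longleftrightarrow> (\<lambda>r. f r * r ^ (n + 1)) integrable_on {0..}"

definition lemma9_term :: "(real \<Rightarrow> real) \<Rightarrow> real \<Rightarrow> real \<Rightarrow> nat \<Rightarrow> real \<Rightarrow> real" where
  "lemma9_term f p \<zeta> n s = (1 - 2 * s) * exp (- \<zeta> * s) * moment f (2 * n) * p ^ n *
     (\<Sum>k\<le>n. (-1) ^ (n - k) * (\<zeta> - 1) ^ k / (fact (n - k) * (fact k)^2) * s ^ k)"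

end

theory Submission
  imports Defs
begin

lemma pow_fact_le_exp:
  fixes x :: real assumes "x \<ge> 0" shows "x ^ k / fact k \<le> exp x"
proof -
  have "(\<Sum>n\<in>{k}. x ^ n /\<^sub>R fact n) \<le> (\<Sum>n. x ^ n /\<^sub>R fact n)"
    by (rule sum_le_suminf[OF summable_exp_generic]) (use assms in auto)
  then show ?thesis by (simp add: exp_def divide_inverse mult.commute)
qed

lemma ptwise:
  fixes s \<zeta> :: real assumes s: "s \<ge> 0" and z: "\<zeta> \<ge> 1"
  shows "abs (1 - 2 * s) * exp (-\<zeta> * s) * s ^ k \<le> 8 * 2^k * fact k * exp (-s/4)"
proof -
  have h1: "abs (1 - 2 * s) \<le> 8 * exp (s/4)"
    using exp_ge_add_one_self[of "s/4"] s by linarith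
  have "(s/2)^k / fact k \<le> exp (s/2)" using pow_fact_le_exp[of "s/2" k] s by simp
  then have h2: "s ^ k \<le> 2^k * fact k * exp (s/2)"
    by (simp add: field_simps power_divide)
  have h3: "exp (-\<zeta> * s) \<le> exp (-s)" using mult_right_mono[OF z s] by simp
  have "abs (1 - 2 * s) * exp (-\<zeta> * s) * s ^ k \<le> (8 * exp (s/4)) * exp (-s) * (2^k * fact k * exp (s/2))"
    by (intro mult_mono h1 h2 h3) (use s in auto)
  also have "\<dots> = 8 * 2^k * fact k * (exp (s/4) * exp (-s) * exp (s/2))" by simp
  also have "exp (s/4) * exp (-s) * exp (s/2) = exp (-s/4)"
    by (simp add: exp_add[symmetric])
  finally show ?thesis by simp
qed

lemma binom_sum:
  fixes x :: real
  shows "(\<Sum>k\<le>n. x ^ k / (fact (n-k) * fact k)) = (1 + x) ^ n / fact n"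
proof -
  have "(x + 1) ^ n = (\<Sum>k\<le>n. of_nat (n choose k) * x ^ k * 1 ^ (n - k))"
    by (rule binomial_ring)
  also have "\<dots> = (\<Sum>k\<le>n. fact n * (x ^ k / (fact (n-k) * fact k)))"
    by (intro sum.cong refl) (simp add: binomial_fact field_simps)
  also have "\<dots> = fact n * (\<Sum>k\<le>n. x ^ k / (fact (n-k) * fact k))"
    by (simp add: sum_distrib_left)
  finally show ?thesis by (simp add: field_simps add.commute)
qed

lemma moment_nonneg:
  assumes "\<And>r. r \<ge> 0 \<Longrightarrow> 0 \<le> f r \<and> f r \<le> F"
  shows "moment f m \<ge> 0"
proof (cases "(\<lambda>r. f r * r ^ (m + 1)) integrable_on {0..}")
  case True
  then show ?thesis unfolding moment_def
    using assms by (intro mult_nonneg_nonneg integral_nonneg) auto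
next
  case False
  then show ?thesis by (simp add: moment_def not_integrable_integral)
qed

lemma term_bound:
  fixes s \<zeta> p :: real
  assumes s: "s \<ge> 0" and z: "\<zeta> \<ge> 1" and p: "p > 0" and c: "moment f (2*n) \<ge> 0"
  shows "\<bar>lemma9_term f p \<zeta> n s\<bar> \<le> 8 * exp (-s/4) * (moment f (2*n) * (p * (2*\<zeta> - 1)) ^ n / fact n)"
proof -
  define c where "c = moment f (2*n)"
  define w where "w k = (\<zeta> - 1) ^ k / (fact (n - k) * (fact k)^2)" for k
  define g where "g k = (1 - 2 * s) * exp (- \<zeta> * s) * s ^ k" for k
  have w0: "w k \<ge> 0" for k using z unfolding w_def by simp
  have eq: "lemma9_term f p \<zeta> n s = c * p ^ n * (\<Sum>k\<le>n. (-1) ^ (n - k) * w k * g k)"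
    unfolding lemma9_term_def c_def w_def g_def
    by (simp add: sum_distrib_left mult_ac)
  have "\<bar>\<Sum>k\<le>n. (-1) ^ (n - k) * w k * g k\<bar> \<le> (\<Sum>k\<le>n. \<bar>(-1) ^ (n - k) * w k * g k\<bar>)"
    by (rule sum_abs)
  also have "\<dots> \<le> (\<Sum>k\<le>n. w k * (8 * 2^k * fact k * exp (-s/4)))"
  proof (intro sum_mono)
    fix k
    have "\<bar>(-1) ^ (n - k) * w k * g k\<bar> = w k * \<bar>g k\<bar>"
      using w0 by (simp add: abs_mult power_abs)
    also have "\<bar>g k\<bar> = abs (1 - 2 * s) * exp (- \<zeta> * s) * s ^ k"
      unfolding g_def using s by (simp add: abs_mult)
    finally show "\<bar>(-1) ^ (n - k) * w k * g k\<bar> \<le> w k * (8 * 2^k * fact k * exp (-s/4))"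
      using ptwise[OF s z, of k] w0 by (simp add: mult_left_mono)
  qed
  also have "\<dots> = 8 * exp (-s/4) * (\<Sum>k\<le>n. (2 ^ k * (\<zeta> - 1) ^ k) / (fact (n-k) * fact k))"
    unfolding sum_distrib_left w_def
    by (intro sum.cong refl) (simp add: field_simps power2_eq_square)
  also have "(\<Sum>k\<le>n. (2 ^ k * (\<zeta> - 1) ^ k) / (fact (n-k) * fact k)) = (\<Sum>k\<le>n. (2 * (\<zeta> - 1)) ^ k / (fact (n-k) * fact k))"
    by (intro sum.cong refl) (simp only: power_mult_distrib)
  also have "\<dots> = (1 + 2 * (\<zeta> - 1)) ^ n / fact n"
    by (rule binom_sum)
  also have "1 + 2 * (\<zeta> - 1) = 2 * \<zeta> - 1" by simp
  finally have B: "\<bar>\<Sum>k\<le>n. (-1) ^ (n - k) * w k * g k\<bar> \<le> 8 * exp (-s/4) * ((2 * \<zeta> - 1) ^ n / fact n)" .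
  have "\<bar>lemma9_term f p \<zeta> n s\<bar> = c * p ^ n * \<bar>\<Sum>k\<le>n. (-1) ^ (n - k) * w k * g k\<bar>"
    unfolding eq using c p by (simp add: abs_mult c_def)
  also have "\<dots> \<le> c * p ^ n * (8 * exp (-s/4) * ((2 * \<zeta> - 1) ^ n / fact n))"
    by (intro mult_left_mono B) (use c p in \<open>auto simp: c_def\<close>)
  also have "\<dots> = 8 * exp (-s/4) * (c * (p * (2*\<zeta> - 1)) ^ n / fact n)"
    by (simp add: power_mult_distrib)
  finally show ?thesis unfolding c_def .
qed

lemma growth_summable:
  fixes c :: "nat \<Rightarrow> real" and R :: real
  assumes c0: "\<And>m. c m \<ge> 0" and R: "R > 0"
    and growth: "(\<lambda>n. c n powr (1 / real n)) \<in> o(\<lambda>n. sqrt (real n))"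
  shows "summable (\<lambda>n. c (2*n) * R ^ n / fact n)"
proof -
  define \<epsilon> where "\<epsilon> = 1 / sqrt (4 * R * exp 1)"
  have \<epsilon>0: "\<epsilon> > 0" using R unfolding \<epsilon>_def by simp
  have \<epsilon>2: "2 * \<epsilon>^2 * R * exp 1 = 1/2"
    using R unfolding \<epsilon>_def by (simp add: power_divide field_simps)
  from landau_o.smallD[OF growth \<epsilon>0]
  obtain N where N: "\<And>m. m \<ge> N \<Longrightarrow> norm (c m powr (1 / real m)) \<le> \<epsilon> * norm (sqrt (real m))"
    unfolding eventually_sequentially by blast
  have bnd: "norm (c (2*n) * R ^ n / fact n) \<le> (1/2) ^ n" if n: "n \<ge> max N 1" for n
  proof -
    define m where "m = 2 * n"
    have mN: "m \<ge> N" and m0: "m > 0" using n unfolding m_def by auto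
    have cle: "c m \<le> (\<epsilon>^2 * real m) ^ n"
    proof (cases "c m = 0")
      case True then show ?thesis using \<epsilon>0 by simp
    next
      case False
      then have cpos: "c m > 0" using c0[of m] by simp
      have "c m = (c m powr (1 / real m)) powr (real m)"
        using m0 cpos by (simp add: powr_powr)
      also have "\<dots> = (c m powr (1 / real m)) ^ m"
        using cpos by (simp add: powr_realpow)
      also have "\<dots> \<le> (\<epsilon> * sqrt (real m)) ^ m"
        using N[OF mN] by (intro power_mono) auto
      also have "\<dots> = (\<epsilon>^2 * real m) ^ n"
        unfolding m_def by (simp add: power_mult power_mult_distrib)
      finally show ?thesis .
    qed
    have nf: "real n ^ n / fact n \<le> exp 1 ^ n"
      using pow_fact_le_exp[of "real n" n] by (simp add: exp_of_nat_mult[symmetric])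
    have "c (2*n) * R ^ n / fact n \<le> (\<epsilon>^2 * real m) ^ n * R ^ n / fact n"
      using cle R unfolding m_def by (intro divide_right_mono mult_right_mono) auto
    also have "\<dots> = (2 * \<epsilon>^2 * R) ^ n * (real n ^ n / fact n)"
      unfolding m_def by (simp add: power_mult_distrib field_simps)
    also have "\<dots> \<le> (2 * \<epsilon>^2 * R) ^ n * exp 1 ^ n"
      using nf R by (intro mult_left_mono) auto
    also have "\<dots> = (1/2) ^ n"
    proof -
      have "2 * \<epsilon>^2 * R * exp 1 = 1/2" by (rule \<epsilon>2)
      then show ?thesis by (subst power_mult_distrib[symmetric], simp only:)
    qed
    finally show ?thesis using c0[of "2*n"] R by simp
  qed
  show ?thesis
    by (rule summable_comparison_test[OF _ summable_geometric[of "1/2"]]) (use bnd in \<open>auto intro!: exI[of _ "max N 1"]\<close>)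
qed

theorem lemma9:
  fixes f :: "real \<Rightarrow> real" and F p \<zeta> :: real
  assumes bound: "\<And>r. r \<ge> 0 \<Longrightarrow> 0 \<le> f r \<and> f r \<le> F"
    and c0_ex: "moment_exists f 0" and c0_pos: "moment f 0 > 0"
    and c2n_ex: "\<And>n. moment_exists f (2 * n)"
    and growth: "(\<lambda>n. moment f n powr (1 / real n)) \<in> o(\<lambda>n. sqrt (real n))"
    and p: "p > 0" and zeta: "\<zeta> > 1"
  shows "(\<forall>s\<ge>0. summable (\<lambda>n. lemma9_term f p \<zeta> n s))
    \<and> (\<forall>n. lemma9_term f p \<zeta> n integrable_on {0..})
    \<and> (\<exists>I. ((\<lambda>s. \<Sum>n. lemma9_term f p \<zeta> n s) has_integral I) {0..}
          \<and> (\<lambda>n. integral {0..} (lemma9_term f p \<zeta> n)) sums I)"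
proof -
  have z1: "\<zeta> \<ge> 1" using zeta by simp
  have c0: "moment f m \<ge> 0" for m by (rule moment_nonneg[where f=f and F=F]) (rule bound)
  define a where "a n = moment f (2*n) * (p * (2*\<zeta> - 1)) ^ n / fact n" for n
  have a0: "a n \<ge> 0" for n unfolding a_def using c0[of "2*n"] p zeta by (intro divide_nonneg_pos mult_nonneg_nonneg zero_le_power) auto
  have suma: "summable a" unfolding a_def
    by (rule growth_summable[OF c0 _ growth]) (use p zeta in simp)
  define A where "A = suminf a"
  have tb: "\<bar>lemma9_term f p \<zeta> n s\<bar> \<le> 8 * exp (-s/4) * a n" if "s \<ge> 0" for n s
    using term_bound[OF that z1 p c0] unfolding a_def by simp
  have S1: "summable (\<lambda>n. lemma9_term f p \<zeta> n s)" if s: "s \<ge> 0" for s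
    by (rule summable_comparison_test[OF _ summable_mult[OF suma, of "8 * exp (-s/4)"]])
       (use tb[OF s] in auto)
  have eint: "(\<lambda>s. K * exp (- (1/4) * s)) integrable_on {0..}" for K :: real
    using integrable_cmul[OF integrable_on_exp_minus_to_infinity[of "1/4" 0], of K] by simp
  have Sleb: "{0::real..} \<in> sets lebesgue" by (intro sets_completionI_sets) (simp add: borel_closed)
  have S2: "lemma9_term f p \<zeta> n integrable_on {0..}" for n
  proof (rule measurable_bounded_by_integrable_imp_integrable_real[OF _ eint[of "8 * a n"] _ Sleb])
    have "continuous_on {0..} (lemma9_term f p \<zeta> n)"
      unfolding lemma9_term_def by (intro continuous_intros)
    then show "lemma9_term f p \<zeta> n \<in> borel_measurable (lebesgue_on {0..})"
      by (rule continuous_imp_measurable_on_sets_lebesgue[OF _ Sleb])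
    show "\<bar>lemma9_term f p \<zeta> n x\<bar> \<le> 8 * a n * exp (- (1 / 4) * x)" if "x \<in> {0..}" for x
      using tb[of x n] that by (simp add: mult_ac)
  qed
  define P where "P k s = (\<Sum>n<k. lemma9_term f p \<zeta> n s)" for k s
  have Pint: "P k integrable_on {0..}" for k
    unfolding P_def by (intro integrable_sum) (use S2 in auto)
  have Pbd: "norm (P k s) \<le> 8 * A * exp (- (1/4) * s)" if "s \<in> {0..}" for k s
  proof -
    have s: "s \<ge> 0" using that by simp
    have "norm (P k s) \<le> (\<Sum>n<k. \<bar>lemma9_term f p \<zeta> n s\<bar>)"
      unfolding P_def real_norm_def by (rule sum_abs)
    also have "\<dots> \<le> (\<Sum>n<k. 8 * exp (-s/4) * a n)"
      by (intro sum_mono tb s)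
    also have "\<dots> = 8 * exp (-s/4) * (\<Sum>n<k. a n)" by (simp add: sum_distrib_left)
    also have "\<dots> \<le> 8 * exp (-s/4) * A"
      unfolding A_def by (intro mult_left_mono sum_le_suminf suma) (use a0 in auto)
    finally show ?thesis by (simp add: mult_ac)
  qed
  have Pconv: "(\<lambda>k. P k s) \<longlonglongrightarrow> (\<Sum>n. lemma9_term f p \<zeta> n s)" if "s \<in> {0..}" for s
    unfolding P_def by (rule summable_LIMSEQ) (use S1 that in auto)
  note DC = dominated_convergence[OF Pint eint[of "8 * A"] Pbd Pconv]
  have "(\<lambda>k. integral {0..} (P k)) = (\<lambda>k. \<Sum>n<k. integral {0..} (lemma9_term f p \<zeta> n))"
    unfolding P_def by (intro ext integral_sum) (use S2 in auto)
  with DC(2) have sums: "(\<lambda>n. integral {0..} (lemma9_term f p \<zeta> n)) sums integral {0..} (\<lambda>s. \<Sum>n. lemma9_term f p \<zeta> n s)"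
    unfolding sums_def by simp
  have HI: "((\<lambda>s. \<Sum>n. lemma9_term f p \<zeta> n s) has_integral integral {0..} (\<lambda>s. \<Sum>n. lemma9_term f p \<zeta> n s)) {0..}"
    using DC(1) by (rule integrable_integral)
  show ?thesis
    using S1 S2 sums HI by blast
qed

end
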